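(* (1) If $m,n\in\mathbb{N}$, $m\neq n$, and $m/n$ is an integer power of a prime, then the homomorphism $\rho^{\mathbb{Z}}_{\{m,n\},\{m\}}\colon\mathbb{Z}[q]^{\{m,n\}}\to\mathbb{Z}[q]^{\{m\}}$ is not surjective. (2) If $m\mid n$ and $m\neq n$, then $\rho^{\mathbb{Z}}_{\langle n\rangle,\langle m\rangle}\colon\mathbb{Z}[q]^{\langle n\rangle}\to\mathbb{Z}[q]^{\langle m\rangle}$ is not surjective. (3) For each nonempty finite subset $S\subset\mathbb{N}$, the homomorphism $\rho^{\mathbb{Z}}_{\mathbb{N},S}\colon\mathbb{Z}[q]^{\mathbb{N}}\to\mathbb{Z}[q]^S$ is not surjective.
   Context: $q$ is an indeterminate, $\Phi_n(q)$ the $n$th cyclotomic polynomial. For $S\subset\mathbb{N}$, $\Phi_S^*$ is the multiplicative subset of $\mathbb{Z}[q]$ generated by $\{\Phi_k(q):k\in S\}$, directed by divisibility, and $\mathbb{Z}[q]^S=\varprojlim_{f\in\Phi_S^*}\mathbb{Z}[q]/(f)$; for $S'\subset S$, $\rho^{\mathbb{Z}}_{S,S'}$ is induced by the identity of $\mathbb{Z}[q]$. For $n\in\mathbb{N}$, $\langle n\rangle=\{k\in\mathbb{N}:k\mid n\}$, so $\mathbb{Z}[q]^{\langle n\rangle}=\varprojlim_j\mathbb{Z}[q]/(q^n-1)^j$. *)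

theory Defs
  imports Complex_Main "HOL-Computational_Algebra.Polynomial" "HOL-Library.Multiset"
begin

definition cyclotomic :: "nat \<Rightarrow> int poly" where
  "cyclotomic n = (THE p. map_poly of_int p =
      (\<Prod>k\<in>{k\<in>{1..n}. coprime k n}. [:- cis (2 * pi * real k / real n), 1:] :: complex poly))"

definition Phi_star :: "nat set \<Rightarrow> int poly set" where
  "Phi_star S = {prod_mset (image_mset cyclotomic M) | M. set_mset M \<subseteq> S}"

text \<open>Elements of Z[q]^S = lim_{f \<in> Phi_star S} Z[q]/(f), represented by families of
  representatives x f of classes mod f, compatible along divisibility.\<close>
definition invlim_elem :: "nat set \<Rightarrow> (int poly \<Rightarrow> int poly) \<Rightarrow> bool" where
  "invlim_elem S x \<longleftrightarrow>
     (\<forall>f\<in>Phi_star S. \<forall>g\<in>Phi_star S. f dvd g \<longrightarrow> f dvd (x g - x f))"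

text \<open>Surjectivity of rho_{S,S'} : Z[q]^S \<rightarrow> Z[q]^{S'} (S' \<subseteq> S), the map induced by the
  identity of Z[q]: the class (x f mod f)_{f \<in> Phi_star S} goes to (x f mod f)_{f \<in> Phi_star S'}.
  Two families define the same element iff they agree modulo f for every index f.\<close>
definition rhoZ_surjective :: "nat set \<Rightarrow> nat set \<Rightarrow> bool" where
  "rhoZ_surjective S S' \<longleftrightarrow>
     (\<forall>y. invlim_elem S' y \<longrightarrow>
        (\<exists>x. invlim_elem S x \<and> (\<forall>f\<in>Phi_star S'. f dvd (x f - y f))))"

definition divisors_set :: "nat \<Rightarrow> nat set" where
  "divisors_set n = {k. 0 < k \<and> k dvd n}"

end

theory Submission
  imports Defs "HOL-Library.Countable"
begin


abbreviation mi :: "int poly \<Rightarrow> complex poly" where "mi \<equiv> map_poly of_int"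

lemma mi_add: "mi (p + q) = mi p + mi q"
  by (rule poly_eqI) (simp add: coeff_map_poly)
lemma mi_diff: "mi (p - q) = mi p - mi q"
  by (rule poly_eqI) (simp add: coeff_map_poly)
lemma mi_mult: "mi (p * q) = mi p * mi q"
  by (rule poly_eqI) (simp add: coeff_map_poly coeff_mult of_int_sum)
lemma mi_1: "mi 1 = 1" by simp
lemma mi_prod: "mi (\<Prod>i\<in>A. f i) = (\<Prod>i\<in>A. mi (f i))"
  by (induction A rule: infinite_finite_induct) (auto simp: mi_mult)
lemma mi_power: "mi (p ^ k) = mi p ^ k"
  by (induction k) (auto simp: mi_mult)
lemma mi_inj: "mi p = mi q \<longleftrightarrow> p = q"
  by (auto simp: poly_eq_iff coeff_map_poly)
lemma mi_monom: "mi (monom c n) = monom (of_int c) n"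
  by (simp add: map_poly_monom)
lemma mi_degree[simp]: "degree (mi p) = degree p"
  by (rule degree_map_poly) simp
lemma mi_lead: "lead_coeff (mi p) = of_int (lead_coeff p)"
  by (simp add: coeff_map_poly)
lemma mi_eq0: "mi p = 0 \<longleftrightarrow> p = 0"
  using mi_inj[of p 0] by simp



definition Ix :: "nat \<Rightarrow> nat set" where "Ix n = {k\<in>{1..n}. coprime k n}"
definition rt :: "nat \<Rightarrow> nat \<Rightarrow> complex" where "rt n k = cis (2 * pi * real k / real n)"
definition cC :: "nat \<Rightarrow> complex poly" where "cC n = (\<Prod>k\<in>Ix n. [:- rt n k, 1:])"
definition Pr :: "nat \<Rightarrow> complex set" where "Pr n = rt n ` Ix n"

lemma cis_eq_1_iff': "cis t = 1 \<longleftrightarrow> (\<exists>n::int. t = of_int n * 2 * pi)"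
proof
  assume "cis t = 1" then have "cos t = 1" by (simp add: complex_eq_iff)
  then show "\<exists>n::int. t = of_int n * 2 * pi" by (simp add: cos_one_2pi_int)
next
  assume "\<exists>n::int. t = of_int n * 2 * pi"
  then obtain n :: int where "t = of_int n * 2 * pi" by blast
  then show "cis t = 1" using cis_multiple_2pi[of "of_int n"] by (simp add: mult_ac)
qed

lemma cis_int_one:
  assumes "0 < d"
  shows "cis (2 * pi * of_int a / of_nat d) = 1 \<longleftrightarrow> int d dvd a"
proof -
  have "cis (2 * pi * of_int a / of_nat d) = 1 \<longleftrightarrow> (\<exists>n::int. 2 * pi * of_int a / of_nat d = of_int n * 2 * pi)"
    by (rule cis_eq_1_iff')
  also have "\<dots> \<longleftrightarrow> (\<exists>n::int. (of_int a :: real) = of_int (n * int d))"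
    using assms by (intro ex_cong1) (auto simp: field_simps)
  also have "\<dots> \<longleftrightarrow> int d dvd a"
    unfolding of_int_eq_iff by (auto simp: dvd_def mult_ac)
  finally show ?thesis .
qed

lemma rt_div: "0 < n \<Longrightarrow> rt n k / rt n l = cis (2 * pi * of_int (int k - int l) / of_nat n)"
  by (simp add: rt_def cis_divide diff_divide_distrib right_diff_distrib)

lemma rt_eq: "0 < n \<Longrightarrow> rt n k = rt n l \<longleftrightarrow> int n dvd int k - int l"
proof -
  assume n: "0 < n"
  have "rt n l \<noteq> 0" by (simp add: rt_def)
  then have "rt n k = rt n l \<longleftrightarrow> rt n k / rt n l = 1" by (simp add: field_simps)
  then show ?thesis using rt_div[OF n] cis_int_one[OF n, of "int k - int l"] by simp
qed

lemma rt_pow: "rt n k ^ j = rt n (k * j)"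
  by (simp add: rt_def DeMoivre mult_ac)

lemma rt_one: "0 < n \<Longrightarrow> rt n k = 1 \<longleftrightarrow> n dvd k"
  using cis_int_one[of n "int k"] by (simp add: rt_def)

lemma rt_pow_one: "0 < n \<Longrightarrow> rt n k ^ j = 1 \<longleftrightarrow> n dvd k * j"
  by (simp add: rt_pow rt_one)

lemma rt_scale: "0 < g \<Longrightarrow> rt (d * g) (l * g) = rt d l"
  by (simp add: rt_def mult.assoc)

lemma inj_rt: "0 < n \<Longrightarrow> inj_on (rt n) (Ix n)"
proof (rule inj_onI)
  fix k l assume n: "0 < n" and k: "k \<in> Ix n" and l: "l \<in> Ix n" and e: "rt n k = rt n l"
  from e rt_eq[OF n] have d: "int n dvd int k - int l" by simp
  from k l have "1 \<le> k" "k \<le> n" "1 \<le> l" "l \<le> n" by (auto simp: Ix_def)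
  from d obtain c where c: "int k - int l = int n * c" by (auto simp: dvd_def)
  show "k = l"
  proof (cases "c = 0")
    case True then show ?thesis using c by simp
  next
    case False
    then have "\<bar>int n * c\<bar> \<ge> int n" using n by (simp add: abs_mult mult_le_cancel_left1)
    with c \<open>1 \<le> k\<close> \<open>k \<le> n\<close> \<open>1 \<le> l\<close> \<open>l \<le> n\<close> show ?thesis by linarith
  qed
qed



lemma Pr_pow_one: "0 < d \<Longrightarrow> z \<in> Pr d \<Longrightarrow> z ^ j = 1 \<longleftrightarrow> d dvd j"
proof -
  assume d: "0 < d" and z: "z \<in> Pr d"
  then obtain l where l: "l \<in> Ix d" and zl: "z = rt d l" by (auto simp: Pr_def)
  from l have c: "coprime d l" by (auto simp: Ix_def ac_simps)
  have "z ^ j = 1 \<longleftrightarrow> d dvd l * j" using rt_pow_one[OF d] zl by simp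
  also have "\<dots> \<longleftrightarrow> d dvd j" using c by (simp add: coprime_dvd_mult_right_iff)
  finally show ?thesis .
qed

lemma Pr_disj: "0 < d \<Longrightarrow> 0 < d' \<Longrightarrow> z \<in> Pr d \<Longrightarrow> z \<in> Pr d' \<Longrightarrow> d = d'"
  by (metis Pr_pow_one dvd_antisym dvd_refl)

lemma finite_Pr: "finite (Pr d)" by (simp add: Pr_def Ix_def)

lemma roots_eq:
  assumes N: "0 < N"
  shows "{z::complex. z ^ N = 1} = (\<Union>d\<in>{d. d dvd N}. Pr d)"
proof
  show "(\<Union>d\<in>{d. d dvd N}. Pr d) \<subseteq> {z. z ^ N = 1}"
  proof safe
    fix d z assume "d dvd N" "z \<in> Pr d"
    moreover then have "0 < d" using N by (auto intro: Nat.gr0I)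
    ultimately show "z ^ N = 1" using Pr_pow_one by blast
  qed
next
  show "{z::complex. z ^ N = 1} \<subseteq> (\<Union>d\<in>{d. d dvd N}. Pr d)"
  proof safe
    fix z :: complex assume "z ^ N = 1"
    then have "z \<in> rt N ` {..<N}"
      using bij_betw_roots_unity[OF N] by (auto simp: bij_betw_def rt_def)
    then obtain k where k: "k < N" and zk: "z = rt N k" by auto
    show "z \<in> (\<Union>d\<in>{d. d dvd N}. Pr d)"
    proof (cases "k = 0")
      case True
      then have "z = rt 1 1" using zk by (simp add: rt_def)
      moreover have "1 \<in> Ix 1" by (simp add: Ix_def)
      ultimately have "z \<in> Pr 1" by (auto simp: Pr_def)
      then show ?thesis by auto
    next
      case False
      define g where "g = gcd k N"
      define d where "d = N div g"
      define l where "l = k div g"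
      have g0: "0 < g" using N by (simp add: g_def)
      have Ndg: "N = d * g" by (simp add: d_def g_def)
      have klg: "k = l * g" by (simp add: l_def g_def)
      have cop: "coprime l d" unfolding l_def d_def g_def using False by (intro div_gcd_coprime) auto
      have "1 \<le> l" using False klg by (cases l) auto
      moreover have "l \<le> d" using k Ndg klg g0 by auto
      ultimately have "l \<in> Ix d" using cop by (simp add: Ix_def)
      moreover have "z = rt d l" using zk Ndg klg rt_scale[OF g0] by simp
      ultimately have "z \<in> Pr d" by (auto simp: Pr_def)
      moreover have "d dvd N" using Ndg by simp
      ultimately show ?thesis by auto
    qed
  qed
qed

lemma lin_prod_dvd:
  fixes F :: "'a::idom poly"
  assumes "finite A" "\<forall>z\<in>A. poly F z = 0"
  shows "(\<Prod>z\<in>A. [:-z, 1:]) dvd F"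
  using assms
proof (induction A rule: finite_induct)
  case empty then show ?case by simp
next
  case (insert a A)
  then obtain G where G: "F = (\<Prod>z\<in>A. [:-z, 1:]) * G" by (auto elim: dvdE)
  have "poly (\<Prod>z\<in>A. [:-z, 1:]) a \<noteq> 0"
    using insert.hyps by (simp add: poly_prod)
  moreover have "poly F a = 0" using insert.prems by simp
  ultimately have "poly G a = 0" using G by simp
  then have "[:-a, 1:] dvd G" by (simp add: poly_eq_0_iff_dvd)
  then obtain H where "G = [:-a, 1:] * H" by (elim dvdE)
  then have "F = ([:-a, 1:] * (\<Prod>z\<in>A. [:-z, 1:])) * H" using G by (simp only: mult_ac)
  then have "F = (\<Prod>z\<in>insert a A. [:-z, 1:]) * H" by (simp only: prod.insert[OF insert.hyps(1,2)])
  then show ?case by simp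
qed

lemma monic_dvd_eq:
  fixes P F :: "'a::idom poly"
  assumes "lead_coeff P = 1" "lead_coeff F = 1" "degree P = degree F" "P dvd F"
  shows "P = F"
proof -
  obtain G where G: "F = P * G" using assms(4) by (auto elim: dvdE)
  have F0: "F \<noteq> 0" and P0: "P \<noteq> 0" using assms by auto
  then have G0: "G \<noteq> 0" using G by auto
  have "degree F = degree P + degree G" using G P0 G0 degree_mult_eq by blast
  then have dG: "degree G = 0" using assms(3) by simp
  have "lead_coeff F = lead_coeff P * lead_coeff G" using G by (simp add: lead_coeff_mult)
  then have "lead_coeff G = 1" using assms by simp
  then have "G = 1" using dG by (metis degree_0_id one_pCons)
  then show ?thesis using G by simp
qed

lemma monic_lin_prod: "lead_coeff (\<Prod>z\<in>A. [:-z, 1:] :: 'a::idom poly) = 1"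
  by (simp add: lead_coeff_prod)

lemma degree_lin_prod: "finite A \<Longrightarrow> degree (\<Prod>z\<in>A. [:-z, 1:] :: 'a::idom poly) = card A"
  by (subst degree_prod_eq_sum_degree) auto

lemma Xn_complex:
  assumes N: "0 < N"
  shows "(monom 1 N - 1 :: complex poly) = (\<Prod>z\<in>{z. z ^ N = 1}. [:-z, 1:])"
proof -
  have fin: "finite {z::complex. z ^ N = 1}" using N by (intro finite_roots_unity) auto
  have dF: "degree (monom 1 N - 1 :: complex poly) = N"
    using N unfolding diff_conv_add_uminus by (subst degree_add_eq_left) (auto simp: degree_monom_eq)
  have lF: "lead_coeff (monom 1 N - 1 :: complex poly) = 1"
    using dF N by (simp add: coeff_diff)
  show ?thesis
  proof (rule sym, rule monic_dvd_eq)
    show "lead_coeff (\<Prod>z\<in>{z. z ^ N = 1}. [:-z, 1:] :: complex poly) = 1" by (rule monic_lin_prod)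
    show "lead_coeff (monom 1 N - 1 :: complex poly) = 1" by (rule lF)
    show "degree (\<Prod>z\<in>{z. z ^ N = 1}. [:-z, 1:] :: complex poly) = degree (monom 1 N - 1 :: complex poly)"
      using degree_lin_prod[OF fin] card_roots_unity_eq[OF N] dF by simp
    show "(\<Prod>z\<in>{z. z ^ N = 1}. [:-z, 1:]) dvd (monom 1 N - 1 :: complex poly)"
      using fin by (intro lin_prod_dvd) (auto simp: poly_monom)
  qed
qed

lemma cC_Pr: "0 < n \<Longrightarrow> cC n = (\<Prod>z\<in>Pr n. [:-z, 1:])"
  unfolding cC_def Pr_def by (subst prod.reindex[OF inj_rt]) auto

lemma cycl_complex:
  assumes N: "0 < N"
  shows "(monom 1 N - 1 :: complex poly) = (\<Prod>d\<in>{d. d dvd N}. cC d)"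
proof -
  have "(monom 1 N - 1 :: complex poly) = (\<Prod>z\<in>(\<Union>d\<in>{d. d dvd N}. Pr d). [:-z, 1:])"
    using Xn_complex[OF N] roots_eq[OF N] by simp
  also have "\<dots> = (\<Prod>d\<in>{d. d dvd N}. (\<Prod>z\<in>Pr d. [:-z, 1:]))"
  proof (rule prod.UNION_disjoint)
    show "finite {d. d dvd N}" using N by simp
    show "\<forall>d\<in>{d. d dvd N}. finite (Pr d)" by (simp add: finite_Pr)
    show "\<forall>d\<in>{d. d dvd N}. \<forall>d'\<in>{d. d dvd N}. d \<noteq> d' \<longrightarrow> Pr d \<inter> Pr d' = {}"
    proof (intro ballI impI)
      fix d d' assume "d \<in> {d. d dvd N}" "d' \<in> {d. d dvd N}" "d \<noteq> d'"
      moreover then have "0 < d" "0 < d'" using N by (auto intro: Nat.gr0I)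
      ultimately show "Pr d \<inter> Pr d' = {}" using Pr_disj by blast
    qed
  qed
  also have "\<dots> = (\<Prod>d\<in>{d. d dvd N}. cC d)"
    using N by (intro prod.cong refl) (auto simp: cC_Pr intro: Nat.gr0I)
  finally show ?thesis .
qed



lemma int_quot:
  fixes F G :: "int poly" and H :: "complex poly"
  assumes lG: "lead_coeff G = 1" and FGH: "mi F = mi G * H"
  shows "\<exists>Q. H = mi Q"
proof -
  obtain Q R where QR: "pseudo_divmod F G = (Q, R)" by (cases "pseudo_divmod F G")
  have G0: "G \<noteq> 0" using lG by auto
  have "smult (lead_coeff G ^ (Suc (degree F) - degree G)) F = G * Q + R"
    by (rule pseudo_divmod(1)[OF G0 QR])
  then have FQR: "F = G * Q + R" using lG by simp
  have R: "R = 0 \<or> degree R < degree G" by (rule pseudo_divmod(2)[OF G0 QR])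
  have "mi G * H = mi G * mi Q + mi R" using FGH FQR by (simp add: mi_add mi_mult)
  then have e: "mi G * (H - mi Q) = mi R" by (simp add: algebra_simps)
  show ?thesis
  proof (rule ccontr)
    assume "\<not> ?thesis"
    then have ne: "H - mi Q \<noteq> 0" by auto
    have mG0: "mi G \<noteq> 0" using G0 mi_eq0 by blast
    then have "mi R \<noteq> 0" using e ne by auto
    then have R0: "R \<noteq> 0" by auto
    have "degree (mi G * (H - mi Q)) = degree G + degree (H - mi Q)"
      using degree_mult_eq[OF mG0 ne] by simp
    then have "degree R \<ge> degree G" using e by simp
    then show False using R R0 by simp
  qed
qed

lemma lead_cC: "lead_coeff (cC n) = 1"
  unfolding cC_def by (simp add: lead_coeff_prod)

lemma cC_int: "\<exists>F. mi F = cC n"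
proof (induction n rule: less_induct)
  case (less n)
  show ?case
  proof (cases "n = 0")
    case True
    then have "cC n = 1" by (simp add: cC_def Ix_def)
    then show ?thesis by (intro exI[of _ 1]) simp
  next
    case False
    then have n: "0 < n" by simp
    define D where "D = {d. d dvd n \<and> d < n}"
    define Fd where "Fd d = (SOME F. mi F = cC d)" for d
    have Fd: "mi (Fd d) = cC d" if "d \<in> D" for d
    proof -
      have "d < n" using that by (simp add: D_def)
      then have "\<exists>F. mi F = cC d" by (rule less)
      then show ?thesis unfolding Fd_def by (rule someI_ex)
    qed
    define G where "G = (\<Prod>d\<in>D. Fd d)"
    have mG: "mi G = (\<Prod>d\<in>D. cC d)" unfolding G_def mi_prod using Fd by (intro prod.cong) auto
    have "of_int (lead_coeff G) = lead_coeff (mi G)" by (rule mi_lead[symmetric])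
    also have "\<dots> = 1" unfolding mG by (simp add: lead_coeff_prod lead_cC)
    finally have lG: "lead_coeff G = 1" by simp
    have dv: "{d. d dvd n} = insert n D" using n by (auto simp: D_def dest: dvd_imp_le)
    have finD: "finite D" by (simp add: D_def)
    have nD: "n \<notin> D" by (simp add: D_def)
    have "(\<Prod>d\<in>{d. d dvd n}. cC d) = cC n * (\<Prod>d\<in>D. cC d)"
      unfolding dv by (rule prod.insert[OF finD nD])
    then have "(monom 1 n - 1 :: complex poly) = cC n * (\<Prod>d\<in>D. cC d)"
      using cycl_complex[OF n] by simp
    moreover have "mi (monom 1 n - 1) = (monom 1 n - 1 :: complex poly)"
      by (simp add: mi_diff mi_monom)
    ultimately have "mi (monom 1 n - 1) = mi G * cC n" using mG by (simp add: mult_ac)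
    from int_quot[OF lG this] obtain Q where "cC n = mi Q" by blast
    then show ?thesis by auto
  qed
qed

lemma cyc_map: "mi (cyclotomic n) = cC n"
proof -
  have eq: "cC n = (\<Prod>k\<in>{k\<in>{1..n}. coprime k n}. [:- cis (2 * pi * real k / real n), 1:])"
    by (simp add: cC_def Ix_def rt_def)
  obtain F where F: "mi F = cC n" using cC_int by blast
  have "\<exists>!p. mi p = cC n"
  proof (rule ex1I[of _ F])
    show "mi F = cC n" by (rule F)
    fix p assume "mi p = cC n"
    then have "mi p = mi F" using F by simp
    then show "p = F" by (simp only: mi_inj)
  qed
  then have "mi (THE p. mi p = cC n) = cC n" by (rule theI')
  then show ?thesis unfolding cyclotomic_def eq[symmetric] .
qed

lemma cyc_lead: "lead_coeff (cyclotomic n) = 1"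
proof -
  have "of_int (lead_coeff (cyclotomic n)) = lead_coeff (mi (cyclotomic n))" by (rule mi_lead[symmetric])
  also have "\<dots> = (1::complex)" by (simp add: cyc_map lead_cC)
  finally show ?thesis by simp
qed

lemma cyc_nz: "cyclotomic n \<noteq> 0"
  using cyc_lead[of n] by auto

lemma cycl_int:
  assumes N: "0 < N"
  shows "(\<Prod>d\<in>{d. d dvd N}. cyclotomic d) = monom 1 N - 1"
proof -
  have "mi (\<Prod>d\<in>{d. d dvd N}. cyclotomic d) = mi (monom 1 N - 1)"
    using cycl_complex[OF N] by (simp add: mi_prod cyc_map mi_diff mi_monom)
  then show ?thesis by (simp only: mi_inj)
qed



abbreviation pc :: "nat \<Rightarrow> int poly \<Rightarrow> int poly" where "pc p f \<equiv> pcompose f (monom 1 p)"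

lemma pcompose_pow: "pcompose (a ^ n) q = (pcompose a q) ^ n"
  by (induction n) (simp_all add: pcompose_1 pcompose_mult)

lemma monom_1_pow: "(monom 1 n :: 'a::comm_ring_1 poly) = [:0, 1:] ^ n"
  by (simp add: monom_altdef)

lemma pcompose_monom1: "pcompose (monom 1 n) (q :: 'a::comm_ring_1 poly) = q ^ n"
  by (simp add: monom_1_pow pcompose_pow pcompose_pCons)

lemma pc_Xn: "pc p (monom 1 N - 1) = monom 1 (N * p) - 1"
  by (simp add: pcompose_diff pcompose_monom1 pcompose_1 monom_power mult.commute)

lemma prod_pc: "pc p (\<Prod>i\<in>A. f i) = (\<Prod>i\<in>A. pc p (f i))"
  by (rule pcompose_prod)

definition Tc :: "nat \<Rightarrow> nat \<Rightarrow> int poly" where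
  "Tc p d = cyclotomic (d * p) * (if p dvd d then 1 else cyclotomic d)"

lemma Tc_nz: "Tc p d \<noteq> 0" by (simp add: Tc_def cyc_nz)

lemma divisors_split:
  fixes p N :: nat
  assumes p: "prime p" and N: "0 < N"
  shows "{e. e dvd N * p} = (\<lambda>d. d * p) ` {d. d dvd N} \<union> {d. d dvd N \<and> \<not> p dvd d}"
proof (intro equalityI subsetI)
  fix e assume "e \<in> {e. e dvd N * p}"
  then have e: "e dvd N * p" by simp
  show "e \<in> (\<lambda>d. d * p) ` {d. d dvd N} \<union> {d. d dvd N \<and> \<not> p dvd d}"
  proof (cases "p dvd e")
    case True
    then obtain d where d: "e = d * p" by (metis dvdE mult.commute)
    then have "d dvd N" using e p by (simp add: prime_gt_0_nat)
    then show ?thesis using d by auto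
  next
    case False
    then have "coprime p e" using p by (intro prime_imp_coprime) auto
    then have "coprime e p" by (simp add: coprime_commute)
    then have "e dvd N" using e by (simp add: coprime_dvd_mult_left_iff)
    then show ?thesis using False by auto
  qed
next
  fix e assume "e \<in> (\<lambda>d. d * p) ` {d. d dvd N} \<union> {d. d dvd N \<and> \<not> p dvd d}"
  then show "e \<in> {e. e dvd N * p}" by auto
qed

lemma prod_T:
  fixes p N :: nat
  assumes p: "prime p" and N: "0 < N"
  shows "(\<Prod>e\<in>{e. e dvd N * p}. cyclotomic e) = (\<Prod>d\<in>{d. d dvd N}. Tc p d)"
proof -
  have p0: "0 < p" using p by (simp add: prime_gt_0_nat)
  have fin1: "finite ((\<lambda>d. d * p) ` {d. d dvd N})" using N by simp
  have fin2: "finite {d. d dvd N \<and> \<not> p dvd d}" using N by simp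
  have disj: "(\<lambda>d. d * p) ` {d. d dvd N} \<inter> {d. d dvd N \<and> \<not> p dvd d} = {}" by auto
  have "(\<Prod>e\<in>{e. e dvd N * p}. cyclotomic e)
      = (\<Prod>e\<in>(\<lambda>d. d * p) ` {d. d dvd N}. cyclotomic e) * (\<Prod>d\<in>{d. d dvd N \<and> \<not> p dvd d}. cyclotomic d)"
    unfolding divisors_split[OF p N] by (rule prod.union_disjoint[OF fin1 fin2 disj])
  also have "(\<Prod>e\<in>(\<lambda>d. d * p) ` {d. d dvd N}. cyclotomic e) = (\<Prod>d\<in>{d. d dvd N}. cyclotomic (d * p))"
    using p0 by (subst prod.reindex) (auto simp: inj_on_def)
  also have "(\<Prod>d\<in>{d. d dvd N \<and> \<not> p dvd d}. cyclotomic d) = (\<Prod>d\<in>{d. d dvd N}. (if p dvd d then 1 else cyclotomic d))"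
    using N by (subst prod.If_cases) (auto intro!: prod.cong)
  finally show ?thesis by (simp add: Tc_def prod.distrib)
qed

lemma cyc_comp:
  assumes p: "prime p"
  shows "0 < N \<Longrightarrow> pc p (cyclotomic N) = Tc p N"
proof (induction N rule: less_induct)
  case (less N)
  define D where "D = {d. d dvd N \<and> d < N}"
  have finD: "finite D" by (simp add: D_def)
  have nD: "N \<notin> D" by (simp add: D_def)
  have dv: "{d. d dvd N} = insert N D" using less.prems by (auto simp: D_def dest: dvd_imp_le)
  have IH: "pc p (cyclotomic d) = Tc p d" if "d \<in> D" for d
  proof -
    have "d < N" "0 < d" using that less.prems by (auto simp: D_def intro: Nat.gr0I)
    then show ?thesis by (rule less.IH)
  qed
  have "(\<Prod>d\<in>{d. d dvd N}. pc p (cyclotomic d)) = pc p (monom 1 N - 1)"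
    by (simp only: cycl_int[OF less.prems, symmetric] prod_pc)
  also have "\<dots> = monom 1 (N * p) - 1" by (rule pc_Xn)
  also have "\<dots> = (\<Prod>e\<in>{e. e dvd N * p}. cyclotomic e)"
    using less.prems p by (intro cycl_int[symmetric]) (simp add: prime_gt_0_nat)
  also have "\<dots> = (\<Prod>d\<in>{d. d dvd N}. Tc p d)" by (rule prod_T[OF p less.prems])
  finally have "(\<Prod>d\<in>{d. d dvd N}. pc p (cyclotomic d)) = (\<Prod>d\<in>{d. d dvd N}. Tc p d)" .
  then have "pc p (cyclotomic N) * (\<Prod>d\<in>D. pc p (cyclotomic d)) = Tc p N * (\<Prod>d\<in>D. Tc p d)"
    unfolding dv by (simp add: prod.insert[OF finD nD])
  moreover have "(\<Prod>d\<in>D. pc p (cyclotomic d)) = (\<Prod>d\<in>D. Tc p d)" using IH by (rule prod.cong[OF refl])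
  moreover have "(\<Prod>d\<in>D. Tc p d) \<noteq> 0" using finD by (simp add: Tc_nz)
  ultimately show ?case by simp
qed



definition cg :: "nat \<Rightarrow> int poly \<Rightarrow> int poly \<Rightarrow> bool" where
  "cg p A B \<longleftrightarrow> [:int p:] dvd (A - B)"

lemma cg_refl: "cg p A A" by (simp add: cg_def)
lemma cg_sym: "cg p A B \<Longrightarrow> cg p B A"
proof -
  assume "cg p A B"
  then have "[:int p:] dvd - (A - B)" unfolding cg_def by (simp only: dvd_minus_iff)
  then show ?thesis unfolding cg_def by simp
qed
lemma cg_trans: "cg p A B \<Longrightarrow> cg p B C \<Longrightarrow> cg p A C"
proof -
  assume "cg p A B" "cg p B C"
  then have "[:int p:] dvd (A - B) + (B - C)" unfolding cg_def by (rule dvd_add)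
  then show ?thesis unfolding cg_def by simp
qed
lemma cg_add: "cg p A B \<Longrightarrow> cg p C D \<Longrightarrow> cg p (A + C) (B + D)"
proof -
  assume "cg p A B" "cg p C D"
  then have "[:int p:] dvd (A - B) + (C - D)" unfolding cg_def by (rule dvd_add)
  then show ?thesis unfolding cg_def by (simp add: algebra_simps)
qed
lemma cg_mult: "cg p A B \<Longrightarrow> cg p C D \<Longrightarrow> cg p (A * C) (B * D)"
proof -
  assume "cg p A B" "cg p C D"
  then have "[:int p:] dvd (A - B) * C + B * (C - D)" unfolding cg_def by (intro dvd_add dvd_mult2 dvd_mult)
  then show ?thesis unfolding cg_def by (simp add: algebra_simps)
qed
lemma cg_pow: "cg p A B \<Longrightarrow> cg p (A ^ k) (B ^ k)"
  by (induction k) (simp_all add: cg_refl cg_mult)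

lemma freshman:
  fixes a b :: "'a::comm_ring_1"
  assumes p: "prime p"
  shows "of_nat p dvd ((a + b) ^ p - a ^ p - b ^ p)"
proof -
  have p0: "0 < p" using p by (simp add: prime_gt_0_nat)
  define f where "f k = of_nat (p choose k) * a ^ k * b ^ (p - k)" for k
  have "(a + b) ^ p = (\<Sum>k\<le>p. f k)" unfolding f_def by (rule binomial_ring)
  also have "{..p} = insert p (insert 0 {1..<p})" using p0 by auto
  also have "(\<Sum>k\<in>insert p (insert 0 {1..<p}). f k) = f p + (f 0 + (\<Sum>k\<in>{1..<p}. f k))"
    using p0 by (simp add: sum.insert)
  finally have e: "(a + b) ^ p - a ^ p - b ^ p = (\<Sum>k\<in>{1..<p}. f k)"
    by (simp add: f_def)
  have "of_nat p dvd f k" if "k \<in> {1..<p}" for k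
  proof -
    have "p dvd (p choose k)" using that p p0 by (intro dvd_choose_prime) auto
    then obtain c where "p choose k = p * c" by (elim dvdE)
    then have "f k = of_nat p * (of_nat c * a ^ k * b ^ (p - k))" by (simp add: f_def mult_ac)
    then show ?thesis by simp
  qed
  then have "of_nat p dvd (\<Sum>k\<in>{1..<p}. f k)" by (intro dvd_sum) auto
  then show ?thesis using e by simp
qed

lemma fermat_int:
  fixes a :: int
  assumes p: "prime p"
  shows "int p dvd (a ^ p - a)"
proof -
  have p0: "0 < p" using p by (simp add: prime_gt_0_nat)
  have nat: "int p dvd (int n ^ p - int n)" for n
  proof (induction n)
    case 0 then show ?case using p0 by (simp add: zero_power)
  next
    case (Suc n)
    have "int p dvd ((int n + 1) ^ p - int n ^ p - 1 ^ p)" using freshman[OF p, of "int n" 1] by simp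
    then have "int p dvd ((int n + 1) ^ p - int n ^ p - 1 ^ p) + (int n ^ p - int n)" using Suc by (intro dvd_add)
    moreover have eqX: "((int n + 1) ^ p - int n ^ p - 1 ^ p) + (int n ^ p - int n) = int (Suc n) ^ p - int (Suc n)"
      by (simp add: add.commute)
    ultimately show ?case by (simp only: eqX)
  qed
  show ?thesis
  proof (cases "a \<ge> 0")
    case True
    then obtain n where "a = int n" using nonneg_int_cases by blast
    then show ?thesis using nat by simp
  next
    case False
    then have "0 \<le> - a" by simp
    then obtain n where "- a = int n" using nonneg_int_cases by blast
    then have a: "a = - int n" by simp
    define x where "x = int n"
    have h1: "int p dvd (- (x ^ p) - (- x) ^ p)"
      using freshman[OF p, of x "- x"] p0 by (simp add: zero_power)
    have h2: "int p dvd (x ^ p - x)" unfolding x_def by (rule nat)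
    have "int p dvd (- (- (x ^ p) - (- x) ^ p) - (x ^ p - x))"
      using dvd_diff[OF iffD2[OF dvd_minus_iff h1] h2] .
    moreover have "- (- (x ^ p) - (- x) ^ p) - (x ^ p - x) = a ^ p - a"
      using a unfolding x_def by (simp add: algebra_simps)
    ultimately show ?thesis by simp
  qed
qed

lemma cg_const_pow: "prime p \<Longrightarrow> cg p ([:a:] ^ p) [:a:]"
proof -
  assume p: "prime p"
  obtain c where "a ^ p - a = int p * c" using fermat_int[OF p, of a] by (elim dvdE)
  have cp: "[:a:] ^ k = [:a ^ k:]" for k by (induction k) auto
  then have "[:a:] ^ p - [:a:] = [:int p:] * [:c:]" using \<open>a ^ p - a = int p * c\<close> by simp
  then show ?thesis unfolding cg_def by simp
qed

lemma pCons_split: "pCons a (g :: 'a::comm_ring_1 poly) = [:a:] + [:0, 1:] * g"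
  by (simp add: poly_eq_iff coeff_pCons split: nat.split)

lemma frobenius:
  assumes p: "prime p"
  shows "cg p (f ^ p) (pc p f)"
proof (induction f)
  case 0
  have "0 < p" using p by (simp add: prime_gt_0_nat)
  then show ?case by (simp add: cg_refl zero_power)
next
  case (pCons a g)
  have e: "[:a:] + [:0, 1:] * g = pCons a g" by (rule pCons_split[symmetric])
  have fr: "of_nat p dvd ((pCons a g) ^ p - [:a:] ^ p - ([:0, 1:] * g) ^ p)"
    using freshman[OF p, of "[:a:]" "[:0, 1:] * g"] unfolding e .
  have c1: "cg p ((pCons a g) ^ p) ([:a:] ^ p + ([:0, 1:] * g) ^ p)"
    using fr by (simp only: cg_def of_nat_poly diff_diff_eq)
  have c2: "cg p ([:a:] ^ p + ([:0, 1:] * g) ^ p) ([:a:] + monom 1 p * pc p g)"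
  proof (rule cg_add)
    show "cg p ([:a:] ^ p) [:a:]" by (rule cg_const_pow[OF p])
    have "([:0, 1:] * g) ^ p = monom 1 p * g ^ p" by (simp only: power_mult_distrib monom_altdef smult_1_left)
    then show "cg p (([:0, 1:] * g) ^ p) (monom 1 p * pc p g)"
      using cg_mult[OF cg_refl[of p "monom 1 p"] pCons.IH] by simp
  qed
  have c3: "pc p (pCons a g) = [:a:] + monom 1 p * pc p g" by (simp add: pcompose_pCons)
  show ?case using cg_trans[OF c1 c2] unfolding c3 .
qed

lemma cg_cancel:
  assumes p: "prime p" and F: "lead_coeff F = 1" and c: "cg p (F * A) (F * B)"
  shows "cg p A B"
proof -
  have pe: "prime_elem [:int p:]" using p by (simp add: prime_elem_const_poly_iff)
  have "[:int p:] dvd F * (A - B)" using c by (simp add: cg_def algebra_simps)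
  moreover have "\<not> [:int p:] dvd F"
  proof
    assume "[:int p:] dvd F"
    then have "int p dvd lead_coeff F" by (simp add: const_poly_dvd_iff)
    then show False using F p by (simp add: prime_gt_1_nat)
  qed
  ultimately show ?thesis using pe unfolding cg_def by (simp add: prime_elem_dvd_mult_iff)
qed

lemma cyc_Np:
  assumes p: "prime p" and N: "0 < N"
  shows "\<exists>E>0. cg p (cyclotomic (N * p)) (cyclotomic N ^ E)"
proof -
  have fr: "cg p (cyclotomic N ^ p) (Tc p N)" using frobenius[OF p, of "cyclotomic N"] cyc_comp[OF p N] by simp
  show ?thesis
  proof (cases "p dvd N")
    case True
    then have "cg p (cyclotomic (N * p)) (cyclotomic N ^ p)" using fr by (simp add: Tc_def cg_sym)
    then show ?thesis using p by (blast intro: prime_gt_0_nat)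
  next
    case False
    have p1: "p = Suc (p - 1)" using p by (simp add: prime_gt_0_nat)
    have "cyclotomic N ^ p = cyclotomic N * cyclotomic N ^ (p - 1)" by (subst p1) simp
    then have "cg p (cyclotomic N * cyclotomic (N * p)) (cyclotomic N * cyclotomic N ^ (p - 1))"
      using fr False by (simp add: Tc_def cg_sym mult.commute)
    then have "cg p (cyclotomic (N * p)) (cyclotomic N ^ (p - 1))" by (rule cg_cancel[OF p cyc_lead])
    moreover have "0 < p - 1" using p prime_ge_2_nat[of p] by simp
    ultimately show ?thesis by blast
  qed
qed

lemma cyc_Npj:
  assumes p: "prime p" and N: "0 < N"
  shows "\<exists>E>0. cg p (cyclotomic (N * p ^ j)) (cyclotomic N ^ E)"
proof (induction j)
  case 0
  then show ?case by (intro exI[of _ 1]) (simp add: cg_refl)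
next
  case (Suc j)
  then obtain E where E0: "0 < E" and E: "cg p (cyclotomic (N * p ^ j)) (cyclotomic N ^ E)" by blast
  have "0 < N * p ^ j" using N p by (simp add: prime_gt_0_nat)
  then obtain E' where E'0: "0 < E'" and E': "cg p (cyclotomic (N * p ^ j * p)) (cyclotomic (N * p ^ j) ^ E')"
    using cyc_Np[OF p] by blast
  have "cg p (cyclotomic (N * p ^ j) ^ E') (cyclotomic N ^ (E * E'))"
    using cg_pow[OF E, of E'] by (simp add: power_mult)
  then have "cg p (cyclotomic (N * p ^ Suc j)) (cyclotomic N ^ (E * E'))"
    using cg_trans[OF E'] by (simp add: mult_ac)
  then show ?case using E0 E'0 by (intro exI[of _ "E * E'"]) simp
qed



definition memJ :: "nat \<Rightarrow> int poly \<Rightarrow> nat \<Rightarrow> int poly \<Rightarrow> bool" where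
  "memJ p G a X \<longleftrightarrow> (\<exists>v. [:int p ^ a:] dvd (X - G * v))"

lemma J_add: "memJ p G a X \<Longrightarrow> memJ p G a Y \<Longrightarrow> memJ p G a (X + Y)"
proof -
  assume "memJ p G a X" "memJ p G a Y"
  then obtain v w where v: "[:int p ^ a:] dvd (X - G * v)" and w: "[:int p ^ a:] dvd (Y - G * w)"
    unfolding memJ_def by blast
  have "[:int p ^ a:] dvd (X - G * v) + (Y - G * w)" using v w by (rule dvd_add)
  then have "[:int p ^ a:] dvd (X + Y) - G * (v + w)" by (simp add: algebra_simps)
  then show ?thesis unfolding memJ_def by blast
qed

lemma J_mult: "memJ p G a X \<Longrightarrow> memJ p G a (Y * X)"
proof -
  assume "memJ p G a X"
  then obtain v where v: "[:int p ^ a:] dvd (X - G * v)" unfolding memJ_def by blast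
  then have "[:int p ^ a:] dvd Y * (X - G * v)" by (rule dvd_mult)
  then have "[:int p ^ a:] dvd Y * X - G * (Y * v)" by (simp add: algebra_simps)
  then show ?thesis unfolding memJ_def by blast
qed

lemma J_neg: "memJ p G a X \<Longrightarrow> memJ p G a (- X)"
  using J_mult[of p G a X "-1"] by simp

lemma J_diff: "memJ p G a X \<Longrightarrow> memJ p G a Y \<Longrightarrow> memJ p G a (X - Y)"
  using J_add[of p G a X "- Y"] J_neg[of p G a Y] by simp

lemma J_G: "memJ p G a (G * w)"
  unfolding memJ_def by (intro exI[of _ w]) simp

lemma J_0: "memJ p G a 0"
  using J_G[of p G a 0] by simp

lemma J_dvd: "memJ p G a X \<Longrightarrow> X dvd Y \<Longrightarrow> memJ p G a Y"
  by (metis J_mult dvdE mult.commute)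

lemma const_pow_dvd: "b \<le> a \<Longrightarrow> [:(c::int) ^ b:] dvd [:c ^ a:]"
proof -
  assume "b \<le> a"
  then have "c ^ a = c ^ b * c ^ (a - b)" by (simp add: power_add[symmetric])
  then have "[:c ^ a:] = [:c ^ b:] * [:c ^ (a - b):]" by simp
  then show ?thesis by simp
qed

lemma J_mono: "b \<le> a \<Longrightarrow> memJ p G a X \<Longrightarrow> memJ p G b X"
  unfolding memJ_def using const_pow_dvd dvd_trans by blast

lemma J_prod: "memJ p G a X \<Longrightarrow> memJ p G b Y \<Longrightarrow> memJ p G (a + b) (X * Y)"
proof -
  assume "memJ p G a X" "memJ p G b Y"
  then obtain v w where v: "[:int p ^ a:] dvd (X - G * v)" and w: "[:int p ^ b:] dvd (Y - G * w)"
    unfolding memJ_def by blast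
  have "[:int p ^ a:] * [:int p ^ b:] dvd (X - G * v) * (Y - G * w)" using v w by (rule mult_dvd_mono)
  moreover have "[:int p ^ a:] * [:int p ^ b:] = [:int p ^ (a + b):]" by (simp add: power_add)
  moreover have "(X - G * v) * (Y - G * w) = X * Y - G * (v * Y + X * w - G * v * w)"
    by (simp add: algebra_simps)
  ultimately show ?thesis unfolding memJ_def by metis
qed

lemma J_pow: "memJ p G 1 X \<Longrightarrow> memJ p G a (X ^ a)"
proof (induction a)
  case 0
  show ?case unfolding memJ_def by (intro exI[of _ 0]) (simp flip: one_pCons)
next
  case (Suc a)
  then have "memJ p G (1 + a) (X * X ^ a)" by (intro J_prod) auto
  then show ?case by simp
qed

lemma coeff_all_dvd:
  fixes c :: int
  assumes p: "2 \<le> p" and d: "\<forall>a. int p ^ a dvd c"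
  shows "c = 0"
proof (rule ccontr)
  assume c: "c \<noteq> 0"
  define a where "a = nat \<bar>c\<bar>"
  have "\<bar>int p ^ a\<bar> \<le> \<bar>c\<bar>" using d c by (intro dvd_imp_le_int) auto
  moreover have "int a < 2 ^ a" by (metis less_exp of_nat_less_iff of_nat_numeral of_nat_power)
  moreover have "(2::int) ^ a \<le> int p ^ a" using p by (intro power_mono) auto
  ultimately show False unfolding a_def by simp
qed

lemma small_mult_zero:
  fixes G W D :: "int poly"
  assumes G: "lead_coeff G = 1" and D: "D = 0 \<or> degree D < degree G" and e: "D = G * W"
  shows "W = 0"
proof (rule ccontr)
  assume W: "W \<noteq> 0"
  have G0: "G \<noteq> 0" using G by auto
  then have "G * W \<noteq> 0" using W by simp
  moreover have "degree (G * W) = degree G + degree W" using degree_mult_eq[OF G0 W] .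
  ultimately show False using D e by auto
qed

lemma J_inter:
  assumes p: "2 \<le> p" and G: "lead_coeff G = 1" and X: "\<forall>a. memJ p G a X"
  shows "G dvd X"
proof -
  have G0: "G \<noteq> 0" using G by auto
  obtain Q R where QR: "pseudo_divmod X G = (Q, R)" by (cases "pseudo_divmod X G")
  have "smult (lead_coeff G ^ (Suc (degree X) - degree G)) X = G * Q + R"
    by (rule pseudo_divmod(1)[OF G0 QR])
  then have XQR: "X = G * Q + R" using G by simp
  have R: "R = 0 \<or> degree R < degree G" by (rule pseudo_divmod(2)[OF G0 QR])
  have "[:int p ^ a:] dvd R" for a
  proof -
    obtain v where "[:int p ^ a:] dvd (X - G * v)" using X unfolding memJ_def by blast
    then obtain u where u: "X - G * v = [:int p ^ a:] * u" by (elim dvdE)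
    obtain Q' R' where QR': "pseudo_divmod u G = (Q', R')" by (cases "pseudo_divmod u G")
    have "smult (lead_coeff G ^ (Suc (degree u) - degree G)) u = G * Q' + R'"
      by (rule pseudo_divmod(1)[OF G0 QR'])
    then have uQR: "u = G * Q' + R'" using G by simp
    have R': "R' = 0 \<or> degree R' < degree G" by (rule pseudo_divmod(2)[OF G0 QR'])
    have eq: "R - [:int p ^ a:] * R' = G * (v - Q + [:int p ^ a:] * Q')"
      using XQR u uQR by (simp add: algebra_simps smult_add_right)
    have "R - [:int p ^ a:] * R' = 0 \<or> degree (R - [:int p ^ a:] * R') < degree G"
    proof (cases "degree G = 0")
      case True
      then show ?thesis using R R' by simp
    next
      case False
      have "degree R < degree G" using R False by auto
      moreover have "degree ([:int p ^ a:] * R') < degree G"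
        using R' False by (auto simp: degree_mult_le le_less_trans)
      ultimately show ?thesis by (intro disjI2 degree_diff_less)
    qed
    then have "v - Q + [:int p ^ a:] * Q' = 0" using small_mult_zero[OF G _ eq] by blast
    then have "R = [:int p ^ a:] * R'" using eq by simp
    then show ?thesis by (simp only: dvd_triv_left)
  qed
  then have "\<forall>a. int p ^ a dvd coeff R k" for k by (simp add: const_poly_dvd_iff)
  then have "coeff R k = 0" for k using coeff_all_dvd[OF p] by blast
  then have "R = 0" by (simp add: poly_eq_iff)
  then show ?thesis using XQR by simp
qed

lemma mi_dvd: "A dvd B \<Longrightarrow> mi A dvd mi B"
  by (metis dvdE dvdI mi_mult)

lemma poly_cC_self: "0 < n \<Longrightarrow> poly (cC n) (rt n 1) = 0"
proof -
  assume n: "0 < n"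
  have "1 \<in> Ix n" using n by (simp add: Ix_def)
  moreover have "finite (Ix n)" by (simp add: Ix_def)
  moreover have "poly [:- rt n 1, 1:] (rt n 1) = 0" by simp
  ultimately show ?thesis unfolding cC_def poly_prod
    by (intro prod_zero) blast+
qed

lemma poly_cC_other: "0 < n \<Longrightarrow> k \<noteq> n \<Longrightarrow> poly (cC k) (rt n 1) \<noteq> 0"
proof
  assume n: "0 < n" and kn: "k \<noteq> n" and z: "poly (cC k) (rt n 1) = 0"
  have "k \<noteq> 0"
  proof
    assume "k = 0" then have "cC k = 1" by (simp add: cC_def Ix_def)
    then show False using z by simp
  qed
  then have k: "0 < k" by simp
  from z obtain l where l: "l \<in> Ix k" and e: "rt n 1 = rt k l"
    unfolding cC_def poly_prod by (auto simp: prod_zero_iff Ix_def)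
  have "rt n 1 \<in> Pr k" using l e by (auto simp: Pr_def)
  moreover have "rt n 1 \<in> Pr n" using n by (auto simp: Pr_def Ix_def)
  ultimately show False using Pr_disj[OF n k] kn by auto
qed

lemma not_dvd_h:
  assumes n: "0 < n" and S: "finite S" and nS: "n \<notin> S"
  shows "\<not> cyclotomic n dvd (\<Prod>k\<in>S. cyclotomic k) ^ j"
proof
  assume "cyclotomic n dvd (\<Prod>k\<in>S. cyclotomic k) ^ j"
  then have "mi (cyclotomic n) dvd mi ((\<Prod>k\<in>S. cyclotomic k) ^ j)" by (rule mi_dvd)
  then have "cC n dvd (\<Prod>k\<in>S. cC k) ^ j" by (simp add: mi_power mi_prod cyc_map)
  then obtain w where w: "(\<Prod>k\<in>S. cC k) ^ j = cC n * w" by (elim dvdE)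
  have "poly ((\<Prod>k\<in>S. cC k) ^ j) (rt n 1) = 0" using w poly_cC_self[OF n] by simp
  moreover have "\<forall>k\<in>S. poly (cC k) (rt n 1) \<noteq> 0" using poly_cC_other[OF n] nS by metis
  then have "poly ((\<Prod>k\<in>S. cC k) ^ j) (rt n 1) \<noteq> 0"
    using S by (simp add: poly_prod prod_zero_iff)
  ultimately show False by simp
qed



lemma ps_pow: "k \<in> S \<Longrightarrow> cyclotomic k ^ a \<in> Phi_star S"
  unfolding Phi_star_def
  by (rule CollectI, rule exI[of _ "replicate_mset a k"]) auto

lemma ps_mult: "f \<in> Phi_star S \<Longrightarrow> g \<in> Phi_star S \<Longrightarrow> f * g \<in> Phi_star S"
proof -
  assume "f \<in> Phi_star S" "g \<in> Phi_star S"
  then obtain M M' where M: "f = prod_mset (image_mset cyclotomic M)" "set_mset M \<subseteq> S"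
    and M': "g = prod_mset (image_mset cyclotomic M')" "set_mset M' \<subseteq> S"
    unfolding Phi_star_def by blast
  then have "f * g = prod_mset (image_mset cyclotomic (M + M'))" "set_mset (M + M') \<subseteq> S" by auto
  then show ?thesis unfolding Phi_star_def by blast
qed

lemma ps_mono: "S \<subseteq> T \<Longrightarrow> Phi_star S \<subseteq> Phi_star T"
  unfolding Phi_star_def by blast

lemma ps_dvd_h:
  assumes S: "finite S" and f: "f \<in> Phi_star S"
  shows "\<exists>N. f dvd (\<Prod>k\<in>S. cyclotomic k) ^ N"
proof -
  obtain M where M: "f = prod_mset (image_mset cyclotomic M)" "set_mset M \<subseteq> S"
    using f unfolding Phi_star_def by blast
  have "set_mset M \<subseteq> S \<Longrightarrow> \<exists>N. prod_mset (image_mset cyclotomic M) dvd (\<Prod>k\<in>S. cyclotomic k) ^ N"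
  proof (induction M)
    case empty then show ?case by auto
  next
    case (add x M)
    then obtain N where N: "prod_mset (image_mset cyclotomic M) dvd (\<Prod>k\<in>S. cyclotomic k) ^ N" by auto
    have "cyclotomic x dvd (\<Prod>k\<in>S. cyclotomic k)" using add.prems S by (intro dvd_prodI) auto
    then have "cyclotomic x * prod_mset (image_mset cyclotomic M) dvd (\<Prod>k\<in>S. cyclotomic k) * (\<Prod>k\<in>S. cyclotomic k) ^ N"
      using N by (rule mult_dvd_mono)
    then show ?case by (intro exI[of _ "Suc N"]) simp
  qed
  then show ?thesis using M by simp
qed

definition sc :: "int poly \<Rightarrow> (nat \<Rightarrow> bool) \<Rightarrow> nat \<Rightarrow> int poly" where
  "sc h c A = (\<Sum>i<A. if c i then h ^ i else 0)"

lemma sc_dvd: "A \<le> B \<Longrightarrow> h ^ A dvd (sc h c B - sc h c A)"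
proof (induction B)
  case 0 then show ?case by simp
next
  case (Suc B)
  show ?case
  proof (cases "A = Suc B")
    case True then show ?thesis by simp
  next
    case False
    then have AB: "A \<le> B" using Suc.prems by simp
    then have "h ^ A dvd (sc h c B - sc h c A) + (if c B then h ^ B else 0)"
      using Suc.IH by (intro dvd_add) (auto intro: le_imp_power_dvd)
    then show ?thesis by (simp add: sc_def algebra_simps)
  qed
qed

definition Nf :: "int poly \<Rightarrow> int poly \<Rightarrow> nat" where
  "Nf h f = (LEAST N. f dvd h ^ N)"

definition yc :: "int poly \<Rightarrow> (nat \<Rightarrow> bool) \<Rightarrow> int poly \<Rightarrow> int poly" where
  "yc h c f = sc h c (Nf h f)"

lemma Nf_dvd: "\<exists>N. f dvd h ^ N \<Longrightarrow> f dvd h ^ Nf h f"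
  unfolding Nf_def by (rule LeastI_ex)

lemma Nf_le: "f dvd h ^ N \<Longrightarrow> Nf h f \<le> N"
  unfolding Nf_def by (rule Least_le)

lemma yc_compat:
  assumes S: "finite S"
  shows "invlim_elem S (yc (\<Prod>k\<in>S. cyclotomic k) c)"
  unfolding invlim_elem_def
proof (intro ballI impI)
  define h where "h = (\<Prod>k\<in>S. cyclotomic k)"
  fix f g assume f: "f \<in> Phi_star S" and g: "g \<in> Phi_star S" and fg: "f dvd g"
  have fd: "f dvd h ^ Nf h f" unfolding h_def using ps_dvd_h[OF S f] by (rule Nf_dvd)
  have gd: "g dvd h ^ Nf h g" unfolding h_def using ps_dvd_h[OF S g] by (rule Nf_dvd)
  have le: "Nf h f \<le> Nf h g" using dvd_trans[OF fg gd] by (rule Nf_le)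
  have "h ^ Nf h f dvd yc h c g - yc h c f" unfolding yc_def using le by (rule sc_dvd)
  then show "f dvd yc (\<Prod>k\<in>S. cyclotomic k) c g - yc (\<Prod>k\<in>S. cyclotomic k) c f"
    using fd unfolding h_def by (rule dvd_trans[rotated])
qed

lemma yc_approx:
  assumes S: "finite S" and m: "m \<in> S"
  shows "cyclotomic m ^ A dvd (yc (\<Prod>k\<in>S. cyclotomic k) c (cyclotomic m ^ A) - sc (\<Prod>k\<in>S. cyclotomic k) c A)"
proof -
  define h where "h = (\<Prod>k\<in>S. cyclotomic k)"
  define f where "f = cyclotomic m ^ A"
  have fS: "f \<in> Phi_star S" unfolding f_def using m by (rule ps_pow)
  have fd: "f dvd h ^ Nf h f" unfolding h_def using ps_dvd_h[OF S fS] by (rule Nf_dvd)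
  have mh: "cyclotomic m dvd h" unfolding h_def using S m by (rule dvd_prodI)
  have fA: "f dvd h ^ A" unfolding f_def using mh by (rule dvd_power_same)
  show ?thesis
  proof (cases "Nf h f \<le> A")
    case True
    then have "h ^ Nf h f dvd sc h c A - sc h c (Nf h f)" by (rule sc_dvd)
    then have "f dvd sc h c A - sc h c (Nf h f)" using fd by (rule dvd_trans[rotated])
    then have "f dvd - (sc h c A - sc h c (Nf h f))" by (simp only: dvd_minus_iff)
    then show ?thesis unfolding yc_def f_def[symmetric] h_def[symmetric] by simp
  next
    case False
    then have "h ^ A dvd sc h c (Nf h f) - sc h c A" by (intro sc_dvd) simp
    then have "f dvd sc h c (Nf h f) - sc h c A" using fA by (rule dvd_trans[rotated])
    then show ?thesis unfolding yc_def f_def[symmetric] h_def[symmetric] by simp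
  qed
qed



lemma iter_lemma:
  assumes "memJ p G a (h ^ j - h ^ Suc j * B)"
  shows "\<exists>B'. memJ p G a (h ^ j - h ^ (j + K + 1) * B')"
proof (induction K)
  case 0 then show ?case using assms by (intro exI[of _ B]) simp
next
  case (Suc K)
  then obtain B' where B': "memJ p G a (h ^ j - h ^ (j + K + 1) * B')" by blast
  have "memJ p G a ((h ^ j - h ^ (j + K + 1) * B') + (h ^ (K + 1) * B') * (h ^ j - h ^ Suc j * B))"
    using B' assms by (intro J_add J_mult)
  moreover have eq: "(h ^ j - h ^ (j + K + 1) * B') + (h ^ (K + 1) * B') * (h ^ j - h ^ Suc j * B)
      = h ^ j - h ^ (j + Suc K + 1) * (B' * B)"
    by (simp add: algebra_simps power_add)
  ultimately have "memJ p G a (h ^ j - h ^ (j + Suc K + 1) * (B' * B))" by (simp only: eq)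
  then show ?case by blast
qed

lemma no_inj_bool_fun:
  fixes F :: "(nat \<Rightarrow> bool) \<Rightarrow> nat"
  shows "\<not> inj F"
proof
  assume inj: "inj F"
  define g where "g = inv F"
  define d where "d k = (\<not> g k k)" for k
  have "g (F d) = d" unfolding g_def using inj by (rule inv_f_f)
  then have "d (F d) = (\<not> d (F d))" unfolding d_def by metis
  then show False by simp
qed

lemma no_inj_poly:
  fixes Z :: "(nat \<Rightarrow> bool) \<Rightarrow> int poly"
  shows "\<not> inj Z"
proof
  assume "inj Z"
  moreover have "inj (coeffs :: int poly \<Rightarrow> int list)" by (simp add: inj_def coeffs_eq_iff)
  moreover have "inj (to_nat :: int list \<Rightarrow> nat)" by simp
  ultimately have "inj (to_nat \<circ> coeffs \<circ> Z)" by (simp add: inj_compose)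
  then show False using no_inj_bool_fun by blast
qed

lemma obstruction:
  fixes S :: "nat set" and m n p e :: nat
  assumes S: "finite S" and m: "m \<in> S" and n: "0 < n" and nS: "n \<notin> S" and p: "prime p"
    and e: "memJ p (cyclotomic n) 1 (cyclotomic m ^ e)"
  shows "\<not> rhoZ_surjective (insert n S) S"
proof
  assume surj: "rhoZ_surjective (insert n S) S"
  define h where "h = (\<Prod>k\<in>S. cyclotomic k)"
  define G where "G = cyclotomic n"
  define e1 where "e1 = Suc e"
  have p2: "2 \<le> p" using p by (simp add: prime_ge_2_nat)
  have e1: "memJ p G 1 (cyclotomic m ^ e1)"
    unfolding e1_def G_def using e by (simp add: J_mult)
  have mh: "cyclotomic m dvd h" unfolding h_def using S m by (rule dvd_prodI)
  have he1: "memJ p G 1 (h ^ e1)" using e1 by (rule J_dvd) (use mh in \<open>rule dvd_power_same\<close>)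
  have X: "\<exists>x. invlim_elem (insert n S) x \<and> (\<forall>f\<in>Phi_star S. f dvd (x f - yc h c f))" for c
    using surj yc_compat[OF S] unfolding rhoZ_surjective_def h_def by blast
  define xs where "xs c = (SOME x. invlim_elem (insert n S) x \<and> (\<forall>f\<in>Phi_star S. f dvd (x f - yc h c f)))" for c
  have xs: "invlim_elem (insert n S) (xs c) \<and> (\<forall>f\<in>Phi_star S. f dvd (xs c f - yc h c f))" for c
    unfolding xs_def by (rule someI_ex[OF X])
  define Z where "Z c = xs c G" for c
  have GS: "G \<in> Phi_star (insert n S)" using ps_pow[of n "insert n S" 1] by (simp add: G_def)
  have claim1: "memJ p G a (Z c - sc h c (e1 * a))" for c a
  proof -
    define x where "x = xs c"
    define A where "A = e1 * a"
    define f1 where "f1 = cyclotomic m ^ A"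
    define f2 where "f2 = f1 * G"
    have f1S: "f1 \<in> Phi_star S" unfolding f1_def using m by (rule ps_pow)
    have f1S': "f1 \<in> Phi_star (insert n S)" using f1S ps_mono[of S "insert n S"] by blast
    have f2S: "f2 \<in> Phi_star (insert n S)" unfolding f2_def using f1S' GS by (rule ps_mult)
    have comp: "invlim_elem (insert n S) x" and agr: "\<forall>f\<in>Phi_star S. f dvd (x f - yc h c f)"
      using xs[of c] unfolding x_def by auto
    have d1: "G dvd x f2 - x G" using comp GS f2S unfolding invlim_elem_def f2_def by auto
    have d2: "f1 dvd x f2 - x f1" using comp f1S' f2S unfolding invlim_elem_def f2_def by auto
    have d3: "f1 dvd x f1 - yc h c f1" using agr f1S by auto
    have d4: "f1 dvd yc h c f1 - sc h c A" unfolding f1_def h_def by (rule yc_approx[OF S m])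
    have "f1 dvd (x f2 - x f1) + (x f1 - yc h c f1) + (yc h c f1 - sc h c A)"
      using d2 d3 d4 by (intro dvd_add)
    moreover have "memJ p G a f1" unfolding f1_def A_def
      using J_pow[OF e1, of a] by (simp add: power_mult)
    ultimately have m1: "memJ p G a ((x f2 - x f1) + (x f1 - yc h c f1) + (yc h c f1 - sc h c A))"
      using J_dvd by blast
    obtain w where w: "x f2 - x G = G * w" using d1 by (elim dvdE)
    have m2: "memJ p G a (- (x f2 - x G))" unfolding w by (intro J_neg J_G)
    have "memJ p G a (- (x f2 - x G) + ((x f2 - x f1) + (x f1 - yc h c f1) + (yc h c f1 - sc h c A)))"
      using m2 m1 by (rule J_add)
    then show ?thesis unfolding Z_def x_def[symmetric] A_def[symmetric] by (simp add: algebra_simps)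
  qed
  have claim2: "c = c'" if eq: "Z c = Z c'" for c c'
  proof (rule ccontr)
    assume neq: "c \<noteq> c'"
    then have ex: "\<exists>i. c i \<noteq> c' i" by auto
    define j where "j = (LEAST i. c i \<noteq> c' i)"
    have cj: "c j \<noteq> c' j" unfolding j_def using ex by (rule LeastI_ex)
    have below: "c i = c' i" if "i < j" for i using not_less_Least[of i "\<lambda>i. c i \<noteq> c' i"] that unfolding j_def by blast
    define \<delta> :: "int poly" where "\<delta> = (if c j then 1 else -1)"
    have dd: "\<delta> * \<delta> = 1" by (simp add: \<delta>_def)
    have dsum: "\<exists>W. sc h c A - sc h c' A = (if j < A then \<delta> * h ^ j else 0) + h ^ Suc j * W" for A
    proof (induction A)
      case 0 then show ?case by (simp add: sc_def)
    next
      case (Suc A)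
      then obtain W where W: "sc h c A - sc h c' A = (if j < A then \<delta> * h ^ j else 0) + h ^ Suc j * W" by blast
      have step: "sc h c (Suc A) - sc h c' (Suc A) = (sc h c A - sc h c' A)
          + ((if c A then h ^ A else 0) - (if c' A then h ^ A else 0))"
        by (simp add: sc_def)
      consider "A < j" | "A = j" | "j < A" by linarith
      then show ?case
      proof cases
        case 1
        then show ?thesis using step W below[OF 1] by (intro exI[of _ W]) auto
      next
        case 2
        then show ?thesis using step W cj by (intro exI[of _ W]) (auto simp: \<delta>_def)
      next
        case 3
        have "h ^ Suc j dvd ((if c A then h ^ A else 0) - (if c' A then h ^ A else 0))"
          using 3 le_imp_power_dvd[of "Suc j" A h] by auto
        then obtain V where V: "(if c A then h ^ A else 0) - (if c' A then h ^ A else 0) = h ^ Suc j * V"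
          by (elim dvdE)
        show ?thesis using step W V 3 by (intro exI[of _ "W + V"]) (auto simp: algebra_simps)
      qed
    qed
    have hj: "memJ p G a (h ^ j)" for a
    proof -
      define a' where "a' = a + j + 1"
      define A where "A = e1 * a'"
      have jA: "j < A" unfolding A_def a'_def e1_def by simp
      obtain W where W: "sc h c A - sc h c' A = \<delta> * h ^ j + h ^ Suc j * W" using dsum[of A] jA by auto
      have "memJ p G a' ((Z c' - sc h c' A) - (Z c - sc h c A))"
        unfolding A_def by (intro J_diff claim1)
      then have "memJ p G a' (sc h c A - sc h c' A)" using eq by simp
      then have "memJ p G a (sc h c A - sc h c' A)" by (rule J_mono[rotated]) (simp add: a'_def)
      then have "memJ p G a (\<delta> * (\<delta> * h ^ j + h ^ Suc j * W))" unfolding W by (rule J_mult)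
      moreover have "\<delta> * (\<delta> * h ^ j + h ^ Suc j * W) = h ^ j - h ^ Suc j * (- (\<delta> * W))"
        using dd by (simp add: algebra_simps)
      ultimately have "memJ p G a (h ^ j - h ^ Suc j * (- (\<delta> * W)))" by simp
      then obtain B' where B': "memJ p G a (h ^ j - h ^ (j + e1 * a + 1) * B')"
        using iter_lemma by blast
      have ex: "j + e1 * a + 1 = e1 * a + Suc j" by simp
      have "h ^ (j + e1 * a + 1) = h ^ (e1 * a) * h ^ Suc j" unfolding ex by (rule power_add)
      also have "h ^ (e1 * a) = (h ^ e1) ^ a" by (rule power_mult)
      finally have eq2: "(h ^ e1) ^ a * (h ^ Suc j * B') = h ^ (j + e1 * a + 1) * B'"
        by (simp only: mult.assoc)
      have "memJ p G a ((h ^ e1) ^ a * (h ^ Suc j * B'))"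
        using J_pow[OF he1, of a] by (rule J_mult[where Y = "h ^ Suc j * B'", THEN J_dvd]) simp
      then have "memJ p G a (h ^ (j + e1 * a + 1) * B')" by (simp only: eq2)
      from J_add[OF B' this] show ?thesis by simp
    qed
    have "G dvd h ^ j" using J_inter[OF p2 _ allI[OF hj]] by (simp add: G_def cyc_lead)
    then show False using not_dvd_h[OF n S nS] unfolding G_def h_def by blast
  qed
  have "inj Z" using claim2 by (auto simp: inj_def)
  then show False using no_inj_poly by blast
qed



lemma surj_mono:
  assumes "rhoZ_surjective S S'" "S' \<subseteq> T" "T \<subseteq> S"
  shows "rhoZ_surjective T S'"
  unfolding rhoZ_surjective_def
proof (intro allI impI)
  fix y assume "invlim_elem S' y"
  then obtain x where x: "invlim_elem S x" "\<forall>f\<in>Phi_star S'. f dvd (x f - y f)"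
    using assms(1) unfolding rhoZ_surjective_def by blast
  have "invlim_elem T x" using x(1) ps_mono[OF assms(3)] unfolding invlim_elem_def by blast
  then show "\<exists>x. invlim_elem T x \<and> (\<forall>f\<in>Phi_star S'. f dvd (x f - y f))" using x(2) by blast
qed

lemma obs2:
  fixes S :: "nat set" and m n p k :: nat
  assumes S: "finite S" and m: "m \<in> S" and n: "0 < n" and nS: "n \<notin> S" and p: "prime p"
    and mn: "n = m * p ^ k \<or> m = n * p ^ k"
  shows "\<not> rhoZ_surjective (insert n S) S"
proof -
  have "\<exists>e. memJ p (cyclotomic n) 1 (cyclotomic m ^ e)"
  proof (cases "n = m * p ^ k")
    case True
    then have m0: "0 < m" using n by (cases m) auto
    obtain E where E: "cg p (cyclotomic (m * p ^ k)) (cyclotomic m ^ E)" using cyc_Npj[OF p m0] by blast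
    then have "[:int p:] dvd cyclotomic n - cyclotomic m ^ E" using True by (simp add: cg_def)
    then have "[:int p:] dvd - (cyclotomic n - cyclotomic m ^ E)" by (simp only: dvd_minus_iff)
    then have "[:int p ^ 1:] dvd cyclotomic m ^ E - cyclotomic n * 1" by simp
    then show ?thesis unfolding memJ_def by blast
  next
    case False
    then have mk: "m = n * p ^ k" using mn by simp
    obtain E where E0: "0 < E" and E: "cg p (cyclotomic (n * p ^ k)) (cyclotomic n ^ E)"
      using cyc_Npj[OF p n] by blast
    have "cyclotomic n ^ E = cyclotomic n * cyclotomic n ^ (E - 1)" using E0 by (cases E) auto
    then have "[:int p ^ 1:] dvd cyclotomic m ^ 1 - cyclotomic n * cyclotomic n ^ (E - 1)"
      using E mk by (simp add: cg_def)
    then show ?thesis unfolding memJ_def by blast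
  qed
  then obtain e where "memJ p (cyclotomic n) 1 (cyclotomic m ^ e)" by blast
  then show ?thesis by (rule obstruction[OF S m n nS p])
qed

theorem proposition7p7:
  shows "(\<forall>m n::nat. 0 < m \<and> 0 < n \<and> m \<noteq> n \<and>
            (\<exists>p k. prime (p::nat) \<and> (m = n * p ^ k \<or> n = m * p ^ k))
          \<longrightarrow> \<not> rhoZ_surjective {m, n} {m})
       \<and> (\<forall>m n::nat. 0 < m \<and> 0 < n \<and> m dvd n \<and> m \<noteq> n
          \<longrightarrow> \<not> rhoZ_surjective (divisors_set n) (divisors_set m))
       \<and> (\<forall>S::nat set. finite S \<and> S \<noteq> {} \<and> S \<subseteq> {0<..}
          \<longrightarrow> \<not> rhoZ_surjective {0<..} S)"
proof (intro conjI allI impI)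
  fix m n :: nat
  assume a: "0 < m \<and> 0 < n \<and> m \<noteq> n \<and> (\<exists>p k. prime (p::nat) \<and> (m = n * p ^ k \<or> n = m * p ^ k))"
  then obtain p k where p: "prime p" and mn: "m = n * p ^ k \<or> n = m * p ^ k" by blast
  have "\<not> rhoZ_surjective (insert n {m}) {m}"
    using a mn by (intro obs2[OF _ _ _ _ p, of _ m _ k]) auto
  moreover have "insert n {m} = {m, n}" by auto
  ultimately show "\<not> rhoZ_surjective {m, n} {m}" by simp
next
  fix m n :: nat
  assume a: "0 < m \<and> 0 < n \<and> m dvd n \<and> m \<noteq> n"
  then obtain r where r: "n = m * r" by (auto elim: dvdE)
  have "r \<noteq> 1" using a r by auto
  then obtain p where p: "prime p" and pr: "p dvd r" using prime_factor_nat by blast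
  define n' where "n' = m * p"
  have p2: "2 \<le> p" using p by (simp add: prime_ge_2_nat)
  have n'0: "0 < n'" using a p2 by (simp add: n'_def)
  have fin: "finite (divisors_set m)" using a by (simp add: divisors_set_def)
  have mD: "m \<in> divisors_set m" using a by (simp add: divisors_set_def)
  have n'D: "n' \<notin> divisors_set m"
  proof
    assume "n' \<in> divisors_set m"
    then have "n' \<le> m" using a by (auto simp: divisors_set_def dest: dvd_imp_le)
    moreover have "m < n'" using a p2 by (simp add: n'_def)
    ultimately show False by simp
  qed
  have nn: "\<not> rhoZ_surjective (insert n' (divisors_set m)) (divisors_set m)"
    by (rule obs2[OF fin mD n'0 n'D p, of 1]) (simp add: n'_def)
  have sub1: "divisors_set m \<subseteq> insert n' (divisors_set m)" by auto
  have sub2: "insert n' (divisors_set m) \<subseteq> divisors_set n"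
  proof -
    have "n' dvd n" using pr r by (simp add: n'_def)
    moreover have "divisors_set m \<subseteq> divisors_set n" using a by (auto simp: divisors_set_def intro: dvd_trans)
    ultimately show ?thesis using n'0 by (auto simp: divisors_set_def)
  qed
  show "\<not> rhoZ_surjective (divisors_set n) (divisors_set m)"
    using nn surj_mono[OF _ sub1 sub2] by blast
next
  fix S :: "nat set"
  assume a: "finite S \<and> S \<noteq> {} \<and> S \<subseteq> {0<..}"
  define m where "m = Max S"
  have mS: "m \<in> S" using a by (simp add: m_def)
  have m0: "0 < m" using mS a by auto
  define n' where "n' = m * 2"
  have n'0: "0 < n'" using m0 by (simp add: n'_def)
  have n'S: "n' \<notin> S"
  proof
    assume "n' \<in> S"
    then have "n' \<le> m" using a unfolding m_def by simp
    then show False using m0 by (simp add: n'_def)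
  qed
  have nn: "\<not> rhoZ_surjective (insert n' S) S"
    using a by (intro obs2[OF _ mS n'0 n'S two_is_prime_nat, of 1]) (auto simp: n'_def)
  have sub1: "S \<subseteq> insert n' S" by auto
  have sub2: "insert n' S \<subseteq> {0<..}" using a n'0 by auto
  show "\<not> rhoZ_surjective {0<..} S" using nn surj_mono[OF _ sub1 sub2] by blast
qed

end
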